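(* Let $X$ be a simple abelian variety over $\mathbb{C}$ and let $n \ge 2$ be an integer. Let $F$ be an automorphism of the abelian variety $X^n$ (a group automorphism, i.e. preserving $0$). Then $F$ satisfies the symmetric condition if and only if \[ F = \sigma \circ \begin{pmatrix} f & g & \cdots & g \\ g & f & \ddots & \vdots \\ \vdots & \ddots & \ddots & g \\ g & \cdots & g & f \end{pmatrix} \] for some permutation $\sigma \in \mathfrak{S}_n$ (acting on $X^n$ by permuting the factors, i.e. as a permutation matrix) and some $f, g \in \operatorname{End}(X)$, where the matrix has $f$ on the diagonal and $g$ in every off-diagonal entry.
   Context: All work is over $\mathbb{C}$. Automorphisms and endomorphisms of abelian varieties are taken to be group homomorphisms (preserving $0$); $\operatorname{End}(X)$ is the endomorphism ring of $X$. An abelian variety is simple if it has no nontrivial abelian subvariety. Every endomorphism $F$ of $X^n$ is written as a matrix $(f_{ij})$ with $f_{ij} \in \operatorname{End}(X)$, where $F(x_1,\dots,x_n)_i = \sum_j f_{ij}(x_j)$. The symmetric product $X^{(n)}$ is the quotient of $X^n$ by the permutation action of the symmetric group $\mathfrak{S}_n$, and $\rho\colon X^n \to X^{(n)}$ is the quotient map. An automorphism $F$ of $X^n$ satisfies the symmetric condition if there exists an automorphism $\tau$ of $X^{(n)}$ with $\tau \circ \rho = \rho \circ F$. *)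

theory Defs
  imports "HOL-Analysis.Analysis" "HOL-Combinatorics.Permutations"
begin

text \<open>A complex abelian variety of dimension g is modelled analytically as a complex torus
  C^g / L (L a lattice) admitting a Riemann form (Riemann's criterion).  Endomorphisms are
  represented by their analytic representations: complex g x g matrices A with A L \<subseteq> L.\<close>

definition is_lattice :: "(complex^'g::finite) set \<Rightarrow> bool" where
  "is_lattice L \<longleftrightarrow> (\<exists>B. finite B \<and> card B = 2 * CARD('g) \<and> independent B \<and>
      L = {v. \<exists>k :: complex^'g \<Rightarrow> int. v = (\<Sum>b\<in>B. of_int (k b) *\<^sub>R b)})"

definition herm :: "complex^'g::finite^'g \<Rightarrow> complex^'g \<Rightarrow> complex^'g \<Rightarrow> complex" where
  "herm H x y = (\<Sum>i\<in>UNIV. \<Sum>j\<in>UNIV. x$i * H$i$j * cnj (y$j))"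

definition is_abelian_variety :: "(complex^'g::finite) set \<Rightarrow> bool" where
  "is_abelian_variety L \<longleftrightarrow> is_lattice L \<and>
     (\<exists>H. (\<forall>i j. H$j$i = cnj (H$i$j)) \<and> (\<forall>x. x \<noteq> 0 \<longrightarrow> Re (herm H x x) > 0) \<and>
          (\<forall>x\<in>L. \<forall>y\<in>L. Im (herm H x y) \<in> \<int>))"

definition complex_subspace :: "(complex^'g::finite) set \<Rightarrow> bool" where
  "complex_subspace W \<longleftrightarrow> 0 \<in> W \<and> (\<forall>x\<in>W. \<forall>y\<in>W. x + y \<in> W) \<and> (\<forall>c x. x \<in> W \<longrightarrow> c *s x \<in> W)"

text \<open>Abelian subvarieties of C^g/L correspond to complex subspaces W with W \<inter> L a lattice in W,
  i.e. W \<inter> L spans W over R.\<close>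
definition simple_av :: "(complex^'g::finite) set \<Rightarrow> bool" where
  "simple_av L \<longleftrightarrow> is_abelian_variety L \<and>
     \<not> (\<exists>W. complex_subspace W \<and> W \<noteq> {0} \<and> W \<noteq> UNIV \<and> span (W \<inter> L) = W)"

definition End_AV :: "(complex^'g::finite) set \<Rightarrow> (complex^'g^'g) set" where
  "End_AV L = {A. \<forall>v\<in>L. A *v v \<in> L}"

text \<open>Endomorphisms of X^n as n x n matrices of endomorphisms of X.\<close>
definition mat_app :: "('n::finite \<Rightarrow> 'n \<Rightarrow> complex^'g::finite^'g) \<Rightarrow> ('n \<Rightarrow> complex^'g) \<Rightarrow> ('n \<Rightarrow> complex^'g)" where
  "mat_app F x = (\<lambda>i. \<Sum>j\<in>UNIV. F i j *v x j)"

definition mat_comp :: "('n::finite \<Rightarrow> 'n \<Rightarrow> complex^'g::finite^'g) \<Rightarrow> ('n \<Rightarrow> 'n \<Rightarrow> complex^'g^'g) \<Rightarrow> ('n \<Rightarrow> 'n \<Rightarrow> complex^'g^'g)" where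
  "mat_comp F G = (\<lambda>i j. \<Sum>k\<in>UNIV. F i k ** G k j)"

definition mat_id :: "'n \<Rightarrow> 'n \<Rightarrow> complex^'g::finite^'g" where
  "mat_id = (\<lambda>i j. if i = j then mat 1 else 0)"

definition is_End_pow :: "(complex^'g::finite) set \<Rightarrow> ('n \<Rightarrow> 'n \<Rightarrow> complex^'g^'g) \<Rightarrow> bool" where
  "is_End_pow L F \<longleftrightarrow> (\<forall>i j. F i j \<in> End_AV L)"

definition is_Aut_pow :: "(complex^'g::finite) set \<Rightarrow> ('n::finite \<Rightarrow> 'n \<Rightarrow> complex^'g^'g) \<Rightarrow> bool" where
  "is_Aut_pow L F \<longleftrightarrow> is_End_pow L F \<and>
     (\<exists>G. is_End_pow L G \<and> mat_comp F G = mat_id \<and> mat_comp G F = mat_id)"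

text \<open>Points of X^n are tuples in (C^g)^n modulo L^n; the symmetric product X^(n) is the quotient
  by "equal modulo L after a permutation of the factors".\<close>
definition sym_rel :: "(complex^'g::finite) set \<Rightarrow> (('n \<Rightarrow> complex^'g) \<times> ('n \<Rightarrow> complex^'g)) set" where
  "sym_rel L = {(x, y). \<exists>\<pi>. \<pi> permutes (UNIV :: 'n set) \<and> (\<forall>i. x (\<pi> i) - y i \<in> L)}"

definition sym_prod :: "(complex^'g::finite) set \<Rightarrow> ('n \<Rightarrow> complex^'g) set set" where
  "sym_prod L = UNIV // sym_rel L"

definition rho :: "(complex^'g::finite) set \<Rightarrow> ('n \<Rightarrow> complex^'g) \<Rightarrow> ('n \<Rightarrow> complex^'g) set" where
  "rho L x = sym_rel L `` {x}"

definition symmetric_condition :: "(complex^'g::finite) set \<Rightarrow> ('n::finite \<Rightarrow> 'n \<Rightarrow> complex^'g^'g) \<Rightarrow> bool" where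
  "symmetric_condition L F \<longleftrightarrow>
     (\<exists>\<tau>. bij_betw \<tau> (sym_prod L) (sym_prod L) \<and> (\<forall>x. \<tau> (rho L x) = rho L (mat_app F x)))"

definition perm_mat :: "('n \<Rightarrow> 'n) \<Rightarrow> 'n \<Rightarrow> 'n \<Rightarrow> complex^'g::finite^'g" where
  "perm_mat \<sigma> = (\<lambda>i j. if \<sigma> i = j then mat 1 else 0)"

definition fg_mat :: "complex^'g::finite^'g \<Rightarrow> complex^'g^'g \<Rightarrow> 'n \<Rightarrow> 'n \<Rightarrow> complex^'g^'g" where
  "fg_mat f g = (\<lambda>i j. if i = j then f else g)"

end

theory Submission
  imports Defs
begin


definition ev :: "'n \<Rightarrow> complex^'g::finite \<Rightarrow> 'n \<Rightarrow> complex^'g" where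
  "ev k w = (\<lambda>j. if j = k then w else 0)"

lemma mat_app_ev: "mat_app F (ev k w) i = F i k *v w"
  unfolding mat_app_def ev_def
  by (simp add: if_distrib cong: if_cong)

lemma mat_app_add: "mat_app F (\<lambda>k. x k + y k) = (\<lambda>i. mat_app F x i + mat_app F y i)"
  unfolding mat_app_def by (simp add: matrix_vector_right_distrib sum.distrib)

lemma mat_app_diff: "mat_app F (\<lambda>k. x k - y k) = (\<lambda>i. mat_app F x i - mat_app F y i)"
  unfolding mat_app_def by (simp add: matrix_vector_mult_diff_distrib sum_subtractf)

lemma mvneg: "(A::complex^'a::finite^'b::finite) *v (- v) = - (A *v v)"
  by (metis diff_0 matrix_vector_mult_diff_distrib matrix_vector_mult_0_right)

lemma mat_app_neg: "mat_app F (\<lambda>k. - x k) = (\<lambda>i. - mat_app F x i)"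
  unfolding mat_app_def by (simp add: mvneg sum_negf)

lemma mvscaleR: "(A::complex^'a::finite^'b::finite) *v (c *\<^sub>R x) = c *\<^sub>R (A *v x)"
  using matrix_vector_mul_linear[of A] by (simp add: linear_iff)

lemma mat_app_scaleR: "mat_app F (\<lambda>k. c *\<^sub>R x k) = (\<lambda>i. c *\<^sub>R mat_app F x i)"
  unfolding mat_app_def by (simp add: mvscaleR scaleR_sum_right)

lemma mv_sum: "(A::complex^'a::finite^'b::finite) *v (\<Sum>k\<in>S. v k) = (\<Sum>k\<in>S. A *v v k)"
  by (induction S rule: infinite_finite_induct) (auto simp: matrix_vector_right_distrib)

lemma sum_mv: "(\<Sum>k\<in>S. A k) *v (v::complex^'a::finite) = (\<Sum>k\<in>S. A k *v v)"
  by (induction S rule: infinite_finite_induct) (auto simp: matrix_vector_mult_add_rdistrib)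

lemma mat_app_comp: "mat_app (mat_comp F G) x = mat_app F (mat_app G x)"
proof
  fix i
  have "mat_app F (mat_app G x) i = (\<Sum>j\<in>UNIV. \<Sum>k\<in>UNIV. F i j *v (G j k *v x k))"
    unfolding mat_app_def by (simp add: mv_sum)
  also have "\<dots> = (\<Sum>k\<in>UNIV. \<Sum>j\<in>UNIV. (F i j ** G j k) *v x k)"
    by (subst sum.swap) (simp add: matrix_vector_mul_assoc)
  also have "\<dots> = mat_app (mat_comp F G) x i"
    unfolding mat_app_def mat_comp_def by (simp add: sum_mv)
  finally show "mat_app (mat_comp F G) x i = mat_app F (mat_app G x) i" by simp
qed

lemma mat_app_id: "mat_app mat_id x = x"
proof
  fix i
  have "mat_app mat_id x i = (\<Sum>j\<in>UNIV. if i = j then x j else 0)"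
    unfolding mat_app_def mat_id_def by (rule sum.cong) auto
  then show "mat_app mat_id x i = x i" by simp
qed

lemma lat_props:
  assumes "is_lattice L"
  shows "0 \<in> L" "\<And>x y. x \<in> L \<Longrightarrow> y \<in> L \<Longrightarrow> x + y \<in> L"
    "\<And>x. x \<in> L \<Longrightarrow> - x \<in> L" "\<And>x y. x \<in> L \<Longrightarrow> y \<in> L \<Longrightarrow> x - y \<in> L"
    "span L = UNIV" "countable L"
proof -
  obtain B where B: "finite B" "card B = 2 * CARD('a)" "independent B"
    and L: "L = {v. \<exists>k :: complex^'a \<Rightarrow> int. v = (\<Sum>b\<in>B. of_int (k b) *\<^sub>R b)}"
    using assms unfolding is_lattice_def by blast
  show "0 \<in> L" unfolding L by (rule CollectI, rule exI[of _ "\<lambda>_. 0"]) simp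
  show add: "x + y \<in> L" if xyL: "x \<in> L" "y \<in> L" for x y
  proof -
    obtain k1 where "x = (\<Sum>b\<in>B. of_int (k1 b) *\<^sub>R b)"
      using xyL(1) unfolding L by blast
    moreover obtain k2 where "y = (\<Sum>b\<in>B. of_int (k2 b) *\<^sub>R b)"
      using xyL(2) unfolding L by blast
    ultimately
    have "x + y = (\<Sum>b\<in>B. of_int ((\<lambda>b. k1 b + k2 b) b) *\<^sub>R b)"
      by (simp add: sum.distrib scaleR_add_left)
    then show ?thesis unfolding L by (intro CollectI exI[of _ "\<lambda>b. k1 b + k2 b"]) simp
  qed
  show neg: "- x \<in> L" if xL: "x \<in> L" for x
  proof -
    obtain k1 where "x = (\<Sum>b\<in>B. of_int (k1 b) *\<^sub>R b)"
      using xL unfolding L by blast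
    then have "- x = (\<Sum>b\<in>B. of_int ((\<lambda>b. - k1 b) b) *\<^sub>R b)"
      by (simp add: sum_negf)
    then show ?thesis unfolding L by (intro CollectI exI[of _ "\<lambda>b. - k1 b"]) simp
  qed
  show "x - y \<in> L" if "x \<in> L" "y \<in> L" for x y
    using add[OF that(1) neg[OF that(2)]] by simp
  have BL: "B \<subseteq> L"
  proof
    fix b0 assume "b0 \<in> B"
    then have "b0 = (\<Sum>b\<in>B. of_int ((\<lambda>b. if b = b0 then 1 else 0) b) *\<^sub>R b)"
    proof -
      have "(\<Sum>b\<in>B. of_int ((\<lambda>b. if b = b0 then 1 else 0) b) *\<^sub>R b) = (\<Sum>b\<in>B. if b = b0 then b else 0)"
        by (rule sum.cong) auto
      then show ?thesis using B(1) \<open>b0 \<in> B\<close> by simp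
    qed
    then show "b0 \<in> L" unfolding L by (intro CollectI exI[of _ "\<lambda>b. if b = b0 then 1 else 0"]) simp
  qed
  have "UNIV \<subseteq> span B"
    by (rule card_ge_dim_independent) (use B in auto)
  then show "span L = UNIV" using span_mono[OF BL] by auto
  have "L \<subseteq> (\<lambda>k. \<Sum>b\<in>B. of_int (k b) *\<^sub>R b) ` (Pi\<^sub>E B (\<lambda>_. UNIV :: int set))"
  proof
    fix v assume "v \<in> L"
    then obtain k where k: "v = (\<Sum>b\<in>B. of_int (k b) *\<^sub>R b)" unfolding L by blast
    have "v = (\<Sum>b\<in>B. of_int (restrict k B b) *\<^sub>R b)" unfolding k by (rule sum.cong) auto
    moreover have "restrict k B \<in> Pi\<^sub>E B (\<lambda>_. UNIV)" by auto
    ultimately show "v \<in> (\<lambda>k. \<Sum>b\<in>B. of_int (k b) *\<^sub>R b) ` (Pi\<^sub>E B (\<lambda>_. UNIV :: int set))" by blast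
  qed
  moreover have "countable (Pi\<^sub>E B (\<lambda>_. UNIV :: int set))"
    by (rule countable_PiE) (use B in auto)
  ultimately show "countable L" by (meson countable_image countable_subset)
qed

lemma End_diff: "A \<in> End_AV L \<Longrightarrow> B \<in> End_AV L \<Longrightarrow> is_lattice L \<Longrightarrow> A - B \<in> End_AV L"
  unfolding End_AV_def by (auto simp: matrix_vector_mult_diff_rdistrib intro: lat_props(4))

lemma simple_inj:
  assumes S: "simple_av L" and A: "A \<in> End_AV L" and nz: "A \<noteq> 0" and e: "A *v u = 0"
  shows "u = 0"
proof -
  have lat: "is_lattice L" using S unfolding simple_av_def is_abelian_variety_def by auto
  define W where "W = range (\<lambda>x. A *v x)"
  have cs: "complex_subspace W" unfolding complex_subspace_def W_def
  proof (intro conjI ballI allI impI)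
    show "0 \<in> range ((*v) A)" by (metis matrix_vector_mult_0_right rangeI)
    fix x y assume "x \<in> range ((*v) A)" "y \<in> range ((*v) A)"
    then show "x + y \<in> range ((*v) A)"
      by (auto simp: matrix_vector_right_distrib[symmetric])
  next
    fix c x assume "x \<in> range ((*v) A)"
    then show "c *s x \<in> range ((*v) A)"
      by (auto simp: vector_scalar_commute[symmetric])
  qed
  have "W \<noteq> {0}"
  proof
    assume "W = {0}"
    then have "\<forall>x. A *v x = 0 *v x" unfolding W_def by auto
    then show False using nz matrix_eq by blast
  qed
  moreover have "span (W \<inter> L) = W"
  proof
    have "subspace W" unfolding W_def
      by (simp add: subspace_UNIV linear_subspace_image)
    then show "span (W \<inter> L) \<subseteq> W" by (simp add: span_minimal)
    have "W = (\<lambda>x. A *v x) ` span L" unfolding W_def using lat_props(5)[OF lat] by simp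
    also have "\<dots> = span ((\<lambda>x. A *v x) ` L)" by (simp add: span_linear_image)
    also have "\<dots> \<subseteq> span (W \<inter> L)"
      by (rule span_mono) (use A in \<open>auto simp: W_def End_AV_def\<close>)
    finally show "W \<subseteq> span (W \<inter> L)" .
  qed
  ultimately have "W = UNIV" using S cs unfolding simple_av_def by blast
  then have "surj (\<lambda>x. A *v x)" unfolding W_def by simp
  then have "inj (\<lambda>x. A *v x)" by (simp add: linear_surjective_imp_injective)
  then show "u = 0" using e by (metis injD matrix_vector_mult_0_right)
qed

lemma End_eq:
  assumes S: "simple_av L" and "A \<in> End_AV L" "B \<in> End_AV L" "A \<noteq> B" "A *v u = B *v u"
  shows "u = 0"
proof -
  have lat: "is_lattice L" using S unfolding simple_av_def is_abelian_variety_def by auto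
  show ?thesis
    by (rule simple_inj[OF S End_diff[OF assms(2,3) lat]]) (use assms in \<open>auto simp: matrix_vector_mult_diff_rdistrib\<close>)
qed

lemma lat_sum: "is_lattice L \<Longrightarrow> (\<And>i. i \<in> S \<Longrightarrow> h i \<in> L) \<Longrightarrow> sum h S \<in> L"
  by (induction S rule: infinite_finite_induct) (auto intro: lat_props)

lemma mat_app_L: "is_lattice L \<Longrightarrow> is_End_pow L G \<Longrightarrow> (\<And>k. w k \<in> L) \<Longrightarrow> mat_app G w i \<in> L"
  unfolding mat_app_def is_End_pow_def End_AV_def by (rule lat_sum) auto

lemma sym_rel_equiv:
  assumes "is_lattice L" shows "equiv UNIV (sym_rel L :: (('n::finite \<Rightarrow> complex^'g::finite) \<times> _) set)"
proof (rule equivI)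
  show "refl (sym_rel L :: (('n \<Rightarrow> complex^'g) \<times> _) set)"
    unfolding refl_on_def sym_rel_def using lat_props(1)[OF assms]
    by (auto intro!: exI[of _ id] permutes_id)
  show "sym (sym_rel L :: (('n \<Rightarrow> complex^'g) \<times> _) set)"
  proof (rule symI)
    fix x y :: "'n \<Rightarrow> complex^'g" assume "(x, y) \<in> sym_rel L"
    then obtain \<pi> where p: "\<pi> permutes UNIV" "\<And>i. x (\<pi> i) - y i \<in> L" unfolding sym_rel_def by auto
    have "y (inv \<pi> j) - x j \<in> L" for j
      using lat_props(3)[OF assms p(2)[of "inv \<pi> j"]] p(1) by (simp add: permutes_inverses)
    then show "(y, x) \<in> sym_rel L" unfolding sym_rel_def using permutes_inv[OF p(1)] by auto
  qed
  show "trans (sym_rel L :: (('n \<Rightarrow> complex^'g) \<times> _) set)"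
  proof (rule transI)
    fix x y z :: "'n \<Rightarrow> complex^'g" assume "(x, y) \<in> sym_rel L" "(y, z) \<in> sym_rel L"
    then obtain \<pi> \<pi>' where p: "\<pi> permutes UNIV" "\<And>i. x (\<pi> i) - y i \<in> L"
      and p': "\<pi>' permutes UNIV" "\<And>i. y (\<pi>' i) - z i \<in> L" unfolding sym_rel_def by auto
    have "x ((\<pi> \<circ> \<pi>') i) - z i \<in> L" for i
      using lat_props(2)[OF assms p(2)[of "\<pi>' i"] p'(2)[of i]] by simp
    then show "(x, z) \<in> sym_rel L" unfolding sym_rel_def using permutes_compose[OF p'(1) p(1)] by blast
  qed
qed auto

lemma mat_app_perm: "mat_app (perm_mat \<sigma>) y i = y (\<sigma> i)"
proof -
  have "mat_app (perm_mat \<sigma>) y i = (\<Sum>j\<in>UNIV. if \<sigma> i = j then y j else 0)"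
    unfolding mat_app_def perm_mat_def by (rule sum.cong) auto
  then show ?thesis by simp
qed

lemma mat_app_fg: "mat_app (fg_mat f g) x j = (f - g) *v x j + g *v (\<Sum>k\<in>UNIV. x k)"
proof -
  have "mat_app (fg_mat f g) x j = (\<Sum>k\<in>UNIV. g *v x k + (if j = k then (f - g) *v x k else 0))"
    unfolding mat_app_def fg_mat_def by (rule sum.cong) (auto simp: matrix_vector_mult_diff_rdistrib)
  then show ?thesis by (simp add: sum.distrib mv_sum add.commute)
qed

lemma backward:
  fixes L :: "(complex^'g::finite) set"
    and F :: "'n::finite \<Rightarrow> 'n \<Rightarrow> complex^'g^'g"
  assumes lat: "is_lattice L" and aut: "is_Aut_pow L F" and sig: "\<sigma> permutes (UNIV :: 'n set)"
    and fE: "f \<in> End_AV L" and gE: "g \<in> End_AV L"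
    and Fd: "F = mat_comp (perm_mat \<sigma>) (fg_mat f g)"
  shows "symmetric_condition L F"
proof -
  obtain G where GE: "is_End_pow L G" and FG: "mat_comp F G = mat_id" and GF: "mat_comp G F = mat_id"
    using aut unfolding is_Aut_pow_def by auto
  let ?R = "sym_rel L :: (('n \<Rightarrow> complex^'g) \<times> _) set"
  have eq: "equiv UNIV ?R" by (rule sym_rel_equiv[OF lat])
  have Fx: "mat_app F x i = (f - g) *v x (\<sigma> i) + g *v (\<Sum>k\<in>UNIV. x k)" for x i
    unfolding Fd mat_app_comp mat_app_perm mat_app_fg ..
  have fwd: "(mat_app F x, mat_app F y) \<in> ?R" if xyR: "(x, y) \<in> ?R" for x y
  proof -
    obtain \<pi> where p: "\<pi> permutes UNIV" "\<And>i. x (\<pi> i) - y i \<in> L"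
      using xyR unfolding sym_rel_def by auto
    have "(\<Sum>k\<in>UNIV. x k) = (\<Sum>k\<in>UNIV. x (\<pi> k))"
      using sum.permute[OF p(1), of x] by simp
    then have "(\<Sum>k\<in>UNIV. x k) - (\<Sum>k\<in>UNIV. y k) = (\<Sum>k\<in>UNIV. x (\<pi> k) - y k)"
      by (simp add: sum_subtractf)
    also have "\<dots> \<in> L" by (rule lat_sum[OF lat p(2)])
    finally have sL: "(\<Sum>k\<in>UNIV. x k) - (\<Sum>k\<in>UNIV. y k) \<in> L" .
    define \<pi>' where "\<pi>' = inv \<sigma> \<circ> \<pi> \<circ> \<sigma>"
    have p': "\<pi>' permutes UNIV" unfolding \<pi>'_def
      by (intro permutes_compose permutes_inv sig p(1))
    have "mat_app F x (\<pi>' i) - mat_app F y i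
       = (f - g) *v (x (\<pi> (\<sigma> i)) - y (\<sigma> i)) + g *v ((\<Sum>k\<in>UNIV. x k) - (\<Sum>k\<in>UNIV. y k))" for i
      unfolding Fx \<pi>'_def using permutes_inverses(1)[OF sig]
      by (simp add: matrix_vector_mult_diff_distrib algebra_simps)
    moreover have "\<dots> i \<in> L" for i
    proof -
      have "f - g \<in> End_AV L" by (rule End_diff[OF fE gE lat])
      then show ?thesis
        using gE p(2) sL unfolding End_AV_def by (intro lat_props(2)[OF lat]) auto
    qed
    ultimately show ?thesis unfolding sym_rel_def using p' by auto
  qed
  have inj: "mat_app G (mat_app F x) = x" for x
    using GF by (simp add: mat_app_comp[symmetric] mat_app_id)
  have surj: "mat_app F (mat_app G x) = x" for x
    using FG by (simp add: mat_app_comp[symmetric] mat_app_id)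
  have bwd: "(x, y) \<in> ?R" if xyR: "(mat_app F x, mat_app F y) \<in> ?R" for x y
  proof -
    obtain \<pi> where p: "\<pi> permutes UNIV" "\<And>i. mat_app F x (\<pi> i) - mat_app F y i \<in> L"
      using xyR unfolding sym_rel_def by auto
    define q where "q = \<sigma> \<circ> \<pi> \<circ> inv \<sigma>"
    have q: "q permutes UNIV" unfolding q_def
      by (intro permutes_compose permutes_inv sig p(1))
    have "(\<Sum>k\<in>UNIV. x (q k)) = (\<Sum>k\<in>UNIV. x k)"
      using sum.permute[OF q, of x] by simp
    then have "mat_app F (\<lambda>k. x (q k)) i = mat_app F x (\<pi> i)" for i
      unfolding Fx q_def using permutes_inverses(2)[OF sig] by simp
    then have "mat_app F (\<lambda>k. x (q k) - y k) i \<in> L" for i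
      using p(2) by (simp add: mat_app_diff)
    then have "mat_app G (mat_app F (\<lambda>k. x (q k) - y k)) i \<in> L" for i
      by (rule mat_app_L[OF lat GE])
    then have "x (q i) - y i \<in> L" for i unfolding inj .
    then show ?thesis unfolding sym_rel_def using q by auto
  qed
  define \<tau> where "\<tau> S = rho L (mat_app F (SOME x. x \<in> S))" for S
  have rx: "x \<in> rho L x" for x :: "'n \<Rightarrow> complex^'g"
    unfolding rho_def using eq by (auto simp: equiv_def refl_on_def)
  have tau: "\<tau> (rho L x) = rho L (mat_app F x)" for x
  proof -
    have "(SOME x'. x' \<in> rho L x) \<in> rho L x" using rx[of x] by (rule someI[where P="\<lambda>x'. x' \<in> rho L x"])
    then have "(x, SOME x'. x' \<in> rho L x) \<in> ?R" unfolding rho_def by simp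
    then have "(mat_app F x, mat_app F (SOME x'. x' \<in> rho L x)) \<in> ?R" by (rule fwd)
    then show ?thesis unfolding \<tau>_def rho_def using eq by (simp add: equiv_class_eq)
  qed
  have SP: "sym_prod L = range (rho L :: ('n \<Rightarrow> complex^'g) \<Rightarrow> _)"
    unfolding sym_prod_def rho_def quotient_def by auto
  have "bij_betw \<tau> (sym_prod L) (sym_prod L)"
    unfolding bij_betw_def SP
  proof
    show "inj_on \<tau> (range (rho L))"
    proof (rule inj_onI)
      fix S T assume "S \<in> range (rho L)" "T \<in> range (rho L)" "\<tau> S = \<tau> T"
      then obtain x y where xy: "S = rho L x" "T = rho L y" "rho L (mat_app F x) = rho L (mat_app F y)"
        by (auto simp: tau)
      then have "(mat_app F x, mat_app F y) \<in> ?R" unfolding rho_def using eq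
        by (simp add: eq_equiv_class_iff)
      then have "(x, y) \<in> ?R" by (rule bwd)
      then show "S = T" unfolding xy rho_def using eq by (simp add: equiv_class_eq)
    qed
    show "\<tau> ` range (rho L) = range (rho L)"
    proof
      show "\<tau> ` range (rho L) \<subseteq> range (rho L)" by (auto simp: tau)
      show "range (rho L) \<subseteq> \<tau> ` range (rho L)"
      proof
        fix S assume "S \<in> range (rho L :: ('n \<Rightarrow> complex^'g) \<Rightarrow> _)"
        then obtain y where "S = rho L y" by auto
        then have "S = \<tau> (rho L (mat_app G y))" by (simp add: tau surj)
        then show "S \<in> \<tau> ` range (rho L)" by auto
      qed
    qed
  qed
  then show ?thesis unfolding symmetric_condition_def using tau by blast
qed

lemma subsingleton_finite: "(\<And>x y. x \<in> A \<Longrightarrow> y \<in> A \<Longrightarrow> x = y) \<Longrightarrow> finite A"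
  by (metis finite.simps insertI1 subsetI subset_singletonD finite_subset)

lemma avoid:
  fixes S :: "('a::real_vector \<Rightarrow> 'b::real_vector) set"
  assumes "finite S" "\<forall>N\<in>S. \<forall>x y c. N (x + c *\<^sub>R y) = N x + c *\<^sub>R N y" "\<forall>N\<in>S. \<exists>u. N u \<noteq> 0"
  shows "\<exists>v. \<forall>N\<in>S. N v \<noteq> 0"
  using assms
proof (induction S rule: finite_induct)
  case empty
  then show ?case by simp
next
  case (insert M S)
  then obtain v where v: "\<forall>N\<in>S. N v \<noteq> 0" by auto
  obtain u where u: "M u \<noteq> 0" using insert.prems by auto
  define bad where "bad (N::'a\<Rightarrow>'b) = {t::real. N (v + t *\<^sub>R u) = 0}" for N
  have fin: "finite (bad N)" if "N \<in> insert M S" for N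
  proof (rule subsingleton_finite)
    fix t1 t2 assume t: "t1 \<in> bad N" "t2 \<in> bad N"
    have lin: "N (v + t *\<^sub>R u) = N v + t *\<^sub>R N u" for t using insert.prems(1) that by blast
    show "t1 = t2"
    proof (rule ccontr)
      assume ne: "t1 \<noteq> t2"
      have "N v + t1 *\<^sub>R N u = 0" "N v + t2 *\<^sub>R N u = 0" using t lin unfolding bad_def by auto
      moreover have "(t1 - t2) *\<^sub>R N u = (N v + t1 *\<^sub>R N u) - (N v + t2 *\<^sub>R N u)"
        by (simp add: algebra_simps)
      ultimately have "(t1 - t2) *\<^sub>R N u = 0" by simp
      then have Nu: "N u = 0" using ne by simp
      then have "N v = 0" using \<open>N v + t1 *\<^sub>R N u = 0\<close> by simp
      then show False using Nu u v that by auto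
    qed
  qed
  have "finite (\<Union>N\<in>insert M S. bad N)" using fin insert.hyps(1) by blast
  then obtain t where "t \<notin> (\<Union>N\<in>insert M S. bad N)"
    by (metis ex_new_if_finite infinite_UNIV_char_0)
  then show ?case unfolding bad_def by (intro exI[of _ "v + t *\<^sub>R u"]) auto
qed

lemma mat_app_lin: "mat_app F (\<lambda>k. x k + c *\<^sub>R y k) i = mat_app F x i + c *\<^sub>R mat_app F y i"
  unfolding mat_app_def by (simp add: matrix_vector_right_distrib mvscaleR sum.distrib scaleR_sum_right)

lemma step2:
  fixes L :: "(complex^'g::finite) set"
    and F :: "'n::finite \<Rightarrow> 'n \<Rightarrow> complex^'g^'g"
  assumes lat: "is_lattice L"
    and sc: "\<forall>x. \<exists>\<pi>. \<pi> permutes (UNIV::'n set) \<and> (\<forall>i. mat_app F (x \<circ> p) (\<pi> i) - mat_app F x i \<in> L)"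
  shows "\<exists>\<pi>. \<pi> permutes (UNIV::'n set) \<and> (\<forall>x i. mat_app F (x \<circ> p) (\<pi> i) = mat_app F x i)"
proof (rule ccontr)
  assume H: "\<not> ?thesis"
  define N where "N \<pi> (y :: complex^'g^'n) = (\<chi> i. mat_app F (\<lambda>k. y$(p k)) (\<pi> i) - mat_app F (\<lambda>k. y$k) i)" for \<pi> y
  define P where "P = {\<pi>. \<pi> permutes (UNIV::'n set)}"
  have finP: "finite P" unfolding P_def by (rule finite_permutations) simp
  have lin: "N \<pi> (y + c *\<^sub>R z) = N \<pi> y + c *\<^sub>R N \<pi> z" for \<pi> y z c
  proof -
    have e1: "(\<lambda>k. (y + c *\<^sub>R z)$(p k)) = (\<lambda>k. y$(p k) + c *\<^sub>R z$(p k))" by simp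
    have e2: "(\<lambda>k. (y + c *\<^sub>R z)$k) = (\<lambda>k. y$k + c *\<^sub>R z$k)" by simp
    show ?thesis unfolding N_def e1 e2 mat_app_lin by (simp add: vec_eq_iff algebra_simps)
  qed
  have nz: "\<exists>u. N \<pi> u \<noteq> 0" if piP: "\<pi> \<in> P" for \<pi>
  proof -
    obtain x i where "mat_app F (x \<circ> p) (\<pi> i) \<noteq> mat_app F x i" using H piP unfolding P_def by auto
    moreover have ex: "($) (vec_lambda x) = x" by (rule ext) simp
    ultimately have "N \<pi> (\<chi> k. x k) $ i \<noteq> 0" unfolding N_def by (simp add: o_def)
    then have "N \<pi> (\<chi> k. x k) \<noteq> 0" by (metis zero_index)
    then show ?thesis by blast
  qed
  obtain v where v: "\<forall>M\<in>N ` P. M v \<noteq> 0"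
    using avoid[of "N ` P"] finP lin nz by auto
  define Lv where "Lv = {z :: complex^'g^'n. \<forall>i. z$i \<in> L}"
  have cLv: "countable Lv"
  proof -
    have "Lv \<subseteq> vec_lambda ` (Pi\<^sub>E UNIV (\<lambda>_. L))"
    proof
      fix z assume "z \<in> Lv"
      then have "(\<lambda>i. z$i) \<in> Pi\<^sub>E UNIV (\<lambda>_. L)" unfolding Lv_def by auto
      then show "z \<in> vec_lambda ` (Pi\<^sub>E UNIV (\<lambda>_. L))" by (metis image_eqI vec_lambda_eta)
    qed
    moreover have "countable (Pi\<^sub>E UNIV (\<lambda>_::'n. L))"
      by (rule countable_PiE) (use lat_props(6)[OF lat] in auto)
    ultimately show ?thesis by (meson countable_image countable_subset)
  qed
  have scal: "N \<pi> (t *\<^sub>R y) = t *\<^sub>R N \<pi> y" for \<pi> t y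
    using lin[of \<pi> 0 t y] lin[of \<pi> 0 1 0] by simp
  have cover: "(UNIV :: real set) \<subseteq> (\<Union>\<pi>\<in>P. {t. t *\<^sub>R N \<pi> v \<in> Lv})"
  proof
    fix t :: real
    obtain \<pi> where "\<pi> permutes UNIV" "\<forall>i. mat_app F ((($) (t *\<^sub>R v)) \<circ> p) (\<pi> i) - mat_app F (($) (t *\<^sub>R v)) i \<in> L"
      using sc by blast
    then have "\<pi> \<in> P" "N \<pi> (t *\<^sub>R v) \<in> Lv" unfolding P_def Lv_def N_def by (auto simp: o_def)
    then show "t \<in> (\<Union>\<pi>\<in>P. {t. t *\<^sub>R N \<pi> v \<in> Lv})" by (auto simp: scal)
  qed
  have "countable (\<Union>\<pi>\<in>P. {t. t *\<^sub>R N \<pi> v \<in> Lv})"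
  proof (rule countable_UN)
    show "countable P" using finP by (rule countable_finite)
    fix \<pi> assume "\<pi> \<in> P"
    then have ne: "N \<pi> v \<noteq> 0" using v by auto
    show "countable {t. t *\<^sub>R N \<pi> v \<in> Lv}"
    proof (rule countable_image_inj_on)
      show "countable ((\<lambda>t. t *\<^sub>R N \<pi> v) ` {t. t *\<^sub>R N \<pi> v \<in> Lv})"
        by (rule countable_subset[OF _ cLv]) auto
      show "inj_on (\<lambda>t. t *\<^sub>R N \<pi> v) {t. t *\<^sub>R N \<pi> v \<in> Lv}"
        using ne by (auto intro!: inj_onI simp: scaleR_cancel_right)
    qed
  qed
  then have "countable (UNIV :: real set)" using cover countable_subset by blast
  then show False using uncountable_UNIV_real by blast
qed



definition tr :: "'a \<Rightarrow> 'a \<Rightarrow> 'a \<Rightarrow> 'a" where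
  "tr a b k = (if k = a then b else if k = b then a else k)"

lemma tr_simps [simp]: "tr a b a = b" "tr a b b = a" "k \<noteq> a \<Longrightarrow> k \<noteq> b \<Longrightarrow> tr a b k = k"
  unfolding tr_def by auto

lemma tr_tr [simp]: "tr a b (tr a b k) = k"
  unfolding tr_def by auto

lemma third: "CARD('n::finite) \<ge> 3 \<Longrightarrow> \<exists>k::'n. k \<noteq> x \<and> k \<noteq> y"
proof (rule ccontr)
  assume "CARD('n) \<ge> 3" "\<not> (\<exists>k::'n. k \<noteq> x \<and> k \<noteq> y)"
  then have "UNIV \<subseteq> {x, y}" by auto
  then have "CARD('n) \<le> card {x, y}" by (simp add: card_mono)
  also have "\<dots> \<le> 2" by (simp add: card_insert_le_m1)
  finally show False using \<open>CARD('n) \<ge> 3\<close> by simp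
qed

lemma comb:
  fixes F :: "'n::finite \<Rightarrow> 'n \<Rightarrow> 'm" and PI :: "'n \<Rightarrow> 'n \<Rightarrow> 'n \<Rightarrow> 'n"
  assumes T1: "\<And>a b i k. a \<noteq> b \<Longrightarrow> F (PI a b i) k = F i (tr a b k)"
  and T2: "\<And>a b i. a \<noteq> b \<Longrightarrow> F i a \<noteq> F i b \<longleftrightarrow> PI a b i \<noteq> i"
  and T3: "\<And>a b i j. a \<noteq> b \<Longrightarrow> PI a b i \<noteq> i \<Longrightarrow> PI a b j \<noteq> j \<Longrightarrow> j = i \<or> j = PI a b i"
  and T4: "\<And>a b. a \<noteq> b \<Longrightarrow> \<exists>i. F i a \<noteq> F i b"
  and card: "CARD('n) \<ge> 2"
  shows "\<exists>\<sigma> f g. \<sigma> permutes (UNIV :: 'n set) \<and> (\<forall>i j. F i j = (if \<sigma> i = j then f else g))"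
proof (cases "CARD('n) = 2")
  case True
  then have "\<exists>a b. (UNIV :: 'n set) = {a, b} \<and> a \<noteq> b" by (simp only: card_2_iff)
  then obtain a b :: 'n where ab: "a \<noteq> b" "UNIV = {a, b}" by blast
  obtain i where i: "F i a \<noteq> F i b" using T4[OF ab(1)] by auto
  define i' where "i' = PI a b i"
  have ii: "i' \<noteq> i" using T2[OF ab(1)] i unfolding i'_def by auto
  have all: "x = i \<or> x = i'" for x
  proof -
    have "i \<in> {a, b}" "i' \<in> {a, b}" "x \<in> {a, b}" using ab(2) by auto
    then show ?thesis using ii by auto
  qed
  have ally: "y = a \<or> y = b" for y using ab by auto
  define \<sigma> where "\<sigma> x = (if x = i then a else b)" for x
  have "inj \<sigma>"
  proof (rule injI)
    fix x y assume "\<sigma> x = \<sigma> y" then show "x = y"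
      using all[of x] all[of y] ab(1) unfolding \<sigma>_def by (auto split: if_splits)
  qed
  moreover have "surj \<sigma>"
  proof -
    have "\<sigma> i = a" "\<sigma> i' = b" using ii unfolding \<sigma>_def by auto
    show ?thesis
    proof (rule surjI[where f="\<lambda>y. if y = a then i else i'"])
      fix y show "\<sigma> (if y = a then i else i') = y" using ally[of y] \<open>\<sigma> i = a\<close> \<open>\<sigma> i' = b\<close> by auto
    qed
  qed
  ultimately have "bij \<sigma>" by (simp add: bij_def)
  then have "\<sigma> permutes UNIV" by (intro bij_imp_permutes) auto
  moreover have "F x y = (if \<sigma> x = y then F i a else F i b)" for x y
  proof -
    have "F i' y = F i (tr a b y)" unfolding i'_def by (rule T1[OF ab(1)])
    then show ?thesis using all[of x] ally[of y] ab(1) ii unfolding \<sigma>_def by auto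
  qed
  ultimately show ?thesis by blast
next
  case False
  then have c3: "CARD('n) \<ge> 3" using card by simp
  have A: False if ne: "a \<noteq> b" "a \<noteq> e" "b \<noteq> e" and v: "F i a \<noteq> F i b" "F i a \<noteq> F i e" "F i b \<noteq> F i e"
    for i a b e
  proof -
    define j where "j = PI a b i"
    have ji: "j \<noteq> i" using T2[OF ne(1), of i] v(1) unfolding j_def by blast
    have ja: "F j a = F i b" unfolding j_def T1[OF ne(1)] by simp
    have je: "F j e = F i e" unfolding j_def T1[OF ne(1)] using ne by simp
    have "F j a \<noteq> F j e" using ja je v(3) by simp
    then have pj: "PI a e j \<noteq> j" using T2[OF ne(2), of j] by blast
    have pi: "PI a e i \<noteq> i" using T2[OF ne(2), of i] v(2) by blast
    have "j = PI a e i" using T3[OF ne(2) pi pj] ji by blast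
    then have "F j a = F i e" using T1[OF ne(2), of i a] by simp
    then show False using ja v(3) by simp
  qed
  have B: False if ne: "a \<noteq> a'" "b \<noteq> b'" and v: "F i a = F i a'" "F i b = F i b'" "F i a \<noteq> F i b"
    for i a a' b b'
  proof -
    have d: "a \<noteq> b" "a \<noteq> b'" "a' \<noteq> b" "a' \<noteq> b'" using v by auto
    define j where "j = PI a b' i"
    have "F i a \<noteq> F i b'" using v by simp
    then have ji: "j \<noteq> i" using T2[OF d(2), of i] unfolding j_def by blast
    have ja': "F j a' = F i a'" unfolding j_def T1[OF d(2)] using ne d by simp
    have jb: "F j b = F i b" unfolding j_def T1[OF d(2)] using ne d by simp
    have "F j a' \<noteq> F j b" using ja' jb v by simp
    then have pj: "PI a' b j \<noteq> j" using T2[OF d(3), of j] by blast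
    have "F i a' \<noteq> F i b" using v by simp
    then have pi: "PI a' b i \<noteq> i" using T2[OF d(3), of i] by blast
    have "j = PI a' b i" using T3[OF d(3) pi pj] ji by blast
    then have "F j a = F i a" using T1[OF d(3), of i a] d ne by simp
    moreover have "F j a = F i b'" unfolding j_def T1[OF d(2)] by simp
    ultimately show False using v by simp
  qed
  define Sp where "Sp i s \<longleftrightarrow> (\<forall>k. k \<noteq> s \<longrightarrow> F i k \<noteq> F i s) \<and> (\<forall>k k'. k \<noteq> s \<longrightarrow> k' \<noteq> s \<longrightarrow> F i k = F i k')" for i s
  have Sp1: "F i k \<noteq> F i s" if "Sp i s" "k \<noteq> s" for i s k
    using that unfolding Sp_def by blast
  have Sp2: "F i k = F i k'" if "Sp i s" "k \<noteq> s" "k' \<noteq> s" for i s k k'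
    using that unfolding Sp_def by blast
  have SpI: "Sp i s" if "\<And>k. k \<noteq> s \<Longrightarrow> F i k \<noteq> F i s" "\<And>k k'. k \<noteq> s \<Longrightarrow> k' \<noteq> s \<Longrightarrow> F i k = F i k'" for i s
    using that unfolding Sp_def by blast
  have D: "s = s'" if sp: "Sp i s" "Sp i s'" for i s s'
  proof (rule ccontr)
    assume ne: "s \<noteq> s'"
    obtain k where k: "k \<noteq> s" "k \<noteq> s'" using third[OF c3] by blast
    have "F i k = F i s'" using Sp2[OF sp(1) k(1)] ne by simp
    moreover have "F i k \<noteq> F i s'" using Sp1[OF sp(2) k(2)] .
    ultimately show False by simp
  qed
  have E: "F i a \<noteq> F i b \<longleftrightarrow> s = a \<or> s = b" if sp: "Sp i s" and ab: "a \<noteq> b" for i s a b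
  proof
    assume "F i a \<noteq> F i b"
    then show "s = a \<or> s = b" using Sp2[OF sp, of a b] by blast
  next
    assume "s = a \<or> s = b"
    then show "F i a \<noteq> F i b"
    proof
      assume "s = a" then show ?thesis using Sp1[OF sp, of b] ab by auto
    next
      assume "s = b" then show ?thesis using Sp1[OF sp, of a] ab by auto
    qed
  qed
  have Surj: "\<exists>i. Sp i a" for a
  proof -
    obtain b where ba: "b \<noteq> a" using third[OF c3] by blast
    obtain i where i: "F i a \<noteq> F i b" using T4[of a b] ba by auto
    have C: "\<exists>s. Sp i s"
    proof (cases "\<forall>k. k \<noteq> a \<longrightarrow> F i k \<noteq> F i a")
      case True
      have "Sp i a"
      proof (rule SpI)
        show "F i k \<noteq> F i a" if "k \<noteq> a" for k using True that by blast
        fix k k' assume kk: "k \<noteq> a" "k' \<noteq> a"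
        show "F i k = F i k'"
        proof (rule ccontr)
          assume "F i k \<noteq> F i k'"
          moreover have "F i k \<noteq> F i a" "F i k' \<noteq> F i a" using True kk by blast+
          ultimately show False using A[of k k' a i] by fastforce
        qed
      qed
      then show ?thesis by blast
    next
      case False
      then obtain a' where a': "a' \<noteq> a" "F i a' = F i a" by blast
      have nb: "F i k \<noteq> F i b" if "k \<noteq> b" for k
      proof
        assume "F i k = F i b"
        then show False using B[of a a' b k i] a' i that by simp
      qed
      have "Sp i b"
      proof (rule SpI)
        show "F i k \<noteq> F i b" if "k \<noteq> b" for k using nb that .
        fix k k' assume kk: "k \<noteq> b" "k' \<noteq> b"
        show "F i k = F i k'"
        proof (rule ccontr)
          assume "F i k \<noteq> F i k'"
          moreover have "F i k \<noteq> F i b" "F i k' \<noteq> F i b" using nb kk by blast+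
          ultimately show False using A[of k k' b i] by fastforce
        qed
      qed
      then show ?thesis by blast
    qed
    then obtain s where s: "Sp i s" by blast
    have "s = a \<or> s = b" using E[OF s, of a b] i ba by auto
    then show ?thesis
    proof
      assume "s = a" then show ?thesis using s by blast
    next
      assume sb: "s = b"
      define j where "j = PI a b i"
      have jr: "F j k = F i (tr a b k)" for k unfolding j_def using T1[of a b i k] ba by auto
      have "Sp j a"
      proof (rule SpI)
        fix k assume "k \<noteq> a"
        then have "tr a b k \<noteq> b" unfolding tr_def by auto
        then show "F j k \<noteq> F j a" unfolding jr using Sp1[OF s, of "tr a b k"] sb by simp
      next
        fix k k' assume "k \<noteq> a" "k' \<noteq> a"
        then have "tr a b k \<noteq> b" "tr a b k' \<noteq> b" unfolding tr_def by auto
        then show "F j k = F j k'" unfolding jr using Sp2[OF s, of "tr a b k" "tr a b k'"] sb by simp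
      qed
      then show ?thesis by blast
    qed
  qed
  have Inj: "i = i'" if sp: "Sp i a" "Sp i' a" for i i' a
  proof (rule ccontr)
    assume ne: "i \<noteq> i'"
    obtain b where b: "b \<noteq> a" using third[OF c3] by blast
    obtain b' where b': "b' \<noteq> a" "b' \<noteq> b" using third[OF c3] by blast
    have v: "F i a \<noteq> F i b" "F i' a \<noteq> F i' b" "F i a \<noteq> F i b'" "F i' a \<noteq> F i' b'"
      using E[OF sp(1), of a b] E[OF sp(2), of a b] E[OF sp(1), of a b'] E[OF sp(2), of a b'] b b' by auto
    have ab: "a \<noteq> b" and ab': "a \<noteq> b'" using b b' by auto
    have p: "PI a b i \<noteq> i" "PI a b i' \<noteq> i'" using T2[OF ab, of i] T2[OF ab, of i'] v by blast+
    have p': "PI a b' i \<noteq> i" "PI a b' i' \<noteq> i'" using T2[OF ab', of i] T2[OF ab', of i'] v by blast+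
    have "i' = PI a b i" using T3[OF ab p] ne by blast
    then have "F i' b = F i a" using T1[OF ab, of i b] by simp
    moreover have "i' = PI a b' i" using T3[OF ab' p'] ne by blast
    then have "F i' b = F i b" using T1[OF ab', of i b] b b' by simp
    ultimately show False using v(1) by simp
  qed
  define \<tau> where "\<tau> a = (SOME i. Sp i a)" for a
  have Sp\<tau>: "Sp (\<tau> a) a" for a unfolding \<tau>_def by (rule someI_ex[OF Surj])
  have "inj \<tau>"
  proof (rule injI)
    fix a a' assume "\<tau> a = \<tau> a'"
    then have "Sp (\<tau> a) a'" using Sp\<tau>[of a'] by simp
    then show "a = a'" using D Sp\<tau>[of a] by blast
  qed
  then have "surj \<tau>" by (simp add: finite_UNIV_inj_surj)
  then have b\<tau>: "bij \<tau>" using \<open>inj \<tau>\<close> by (simp add: bij_def)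
  define \<sigma> where "\<sigma> = inv \<tau>"
  have sp: "\<sigma> permutes UNIV" unfolding \<sigma>_def by (intro bij_imp_permutes bij_imp_bij_inv[OF b\<tau>]) auto
  have Sp\<sigma>: "Sp i (\<sigma> i)" for i
  proof -
    have "\<tau> (\<sigma> i) = i" unfolding \<sigma>_def using \<open>surj \<tau>\<close> by (rule surj_f_inv_f)
    then show ?thesis using Sp\<tau>[of "\<sigma> i"] by simp
  qed
  have G: "F i (\<sigma> i) = F i' (\<sigma> i') \<and> (\<forall>j j'. j \<noteq> \<sigma> i \<longrightarrow> j' \<noteq> \<sigma> i' \<longrightarrow> F i j = F i' j')" for i i'
  proof (cases "i = i'")
    case True
    then show ?thesis using Sp2[OF Sp\<sigma>[of i]] by blast
  next
    case False
    define a b where "a = \<sigma> i" and "b = \<sigma> i'"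
    have ab: "a \<noteq> b"
    proof
      assume "a = b"
      then have "\<sigma> i = \<sigma> i'" unfolding a_def b_def .
      then have "i = i'" by (rule injD[OF permutes_inj[OF sp]])
      then show False using False by simp
    qed
    have spa: "Sp i a" and spb: "Sp i' b" unfolding a_def b_def by (rule Sp\<sigma>)+
    have "F i a \<noteq> F i b" "F i' a \<noteq> F i' b" using E[OF spa ab] E[OF spb ab] by auto
    then have p: "PI a b i \<noteq> i" "PI a b i' \<noteq> i'" using T2[OF ab, of i] T2[OF ab, of i'] by blast+
    then have i': "i' = PI a b i" using T3[OF ab p] False by blast
    have r: "F i' k = F i (tr a b k)" for k unfolding i' by (rule T1[OF ab])
    obtain k where k: "k \<noteq> a" "k \<noteq> b" using third[OF c3] by blast
    have "F i' b = F i a" using r[of b] by simp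
    moreover have "F i j = F i' j'" if jj: "j \<noteq> a" "j' \<noteq> b" for j j'
    proof -
      have "F i' j' = F i' k" using Sp2[OF spb jj(2) k(2)] .
      also have "\<dots> = F i k" using r[of k] k by simp
      also have "\<dots> = F i j" using Sp2[OF spa k(1) jj(1)] .
      finally show ?thesis by simp
    qed
    ultimately show ?thesis unfolding a_def b_def by auto
  qed
  obtain i0 :: 'n where True by simp
  obtain j0 where j0: "j0 \<noteq> \<sigma> i0" using third[OF c3] by blast
  have "F i j = (if \<sigma> i = j then F i0 (\<sigma> i0) else F i0 j0)" for i j
  proof (cases "\<sigma> i = j")
    case True then show ?thesis using G[of i i0] by simp
  next
    case False then show ?thesis using G[of i i0] j0 by simp
  qed
  then show ?thesis using sp by blast
qed

lemma tr_permutes: "tr a b permutes UNIV"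
proof -
  have "tr a b \<circ> tr a b = id" by (rule ext) simp
  then have "bij (tr a b)" by (metis o_bij)
  then show ?thesis by (intro bij_imp_permutes) auto
qed

lemma ev_tr: "ev k w \<circ> tr a b = ev (tr a b k) w"
proof
  fix j show "(ev k w \<circ> tr a b) j = ev (tr a b k) w j"
    unfolding ev_def o_def by (metis tr_tr)
qed

lemma forward:
  fixes L :: "(complex^'g::finite) set"
    and F :: "'n::finite \<Rightarrow> 'n \<Rightarrow> complex^'g^'g"
  assumes S: "simple_av L" and card: "CARD('n) \<ge> 2" and aut: "is_Aut_pow L F"
    and sc: "symmetric_condition L F"
  shows "\<exists>\<sigma> f g. \<sigma> permutes (UNIV :: 'n set) \<and> f \<in> End_AV L \<and> g \<in> End_AV L \<and>
       F = mat_comp (perm_mat \<sigma>) (fg_mat f g)"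
proof -
  have lat: "is_lattice L" using S unfolding simple_av_def is_abelian_variety_def by auto
  obtain G where GE: "is_End_pow L G" and FG: "mat_comp F G = mat_id" and GF: "mat_comp G F = mat_id"
    and FE: "is_End_pow L F"
    using aut unfolding is_Aut_pow_def by auto
  have finj: "x = y" if "mat_app F x = mat_app F y" for x y
  proof -
    have "mat_app G (mat_app F x) = mat_app G (mat_app F y)" using that by simp
    then show ?thesis using GF by (simp add: mat_app_comp[symmetric] mat_app_id)
  qed
  have fsurj: "mat_app F (mat_app G y) = y" for y
    using FG by (simp add: mat_app_comp[symmetric] mat_app_id)
  obtain w0 :: "complex^'g" where w0: "w0 \<noteq> 0"
    using axis_eq_0_iff[of undefined "1::complex"] by auto
  let ?R = "sym_rel L :: (('n \<Rightarrow> complex^'g) \<times> _) set"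
  have eq: "equiv UNIV ?R" by (rule sym_rel_equiv[OF lat])
  obtain \<tau> where tau: "\<And>x. \<tau> (rho L x) = rho L (mat_app F x)"
    using sc unfolding symmetric_condition_def by auto
  have wd: "\<exists>\<pi>. \<pi> permutes (UNIV::'n set) \<and> (\<forall>i. mat_app F (x \<circ> p) (\<pi> i) - mat_app F x i \<in> L)"
    if pp: "p permutes (UNIV :: 'n set)" for x p
  proof -
    have "x (p (inv p i)) - x i \<in> L" for i
      using pp lat_props(1)[OF lat] by (simp add: permutes_inverses)
    then have "(x \<circ> p, x) \<in> ?R" unfolding sym_rel_def using permutes_inv[OF pp] by auto
    then have "rho L (x \<circ> p) = rho L x" unfolding rho_def using eq by (simp add: equiv_class_eq)
    then have "rho L (mat_app F (x \<circ> p)) = rho L (mat_app F x)" by (metis tau)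
    then have "(mat_app F (x \<circ> p), mat_app F x) \<in> ?R" unfolding rho_def using eq
      by (simp add: eq_equiv_class_iff)
    then show ?thesis unfolding sym_rel_def by auto
  qed
  define PI where "PI a b = (SOME \<pi>. \<pi> permutes (UNIV::'n set) \<and> (\<forall>x i. mat_app F (x \<circ> tr a b) (\<pi> i) = mat_app F x i))" for a b
  have PI: "PI a b permutes UNIV \<and> (\<forall>x i. mat_app F (x \<circ> tr a b) (PI a b i) = mat_app F x i)" for a b
  proof -
    have "\<exists>\<pi>. \<pi> permutes (UNIV::'n set) \<and> (\<forall>x i. mat_app F (x \<circ> tr a b) (\<pi> i) = mat_app F x i)"
      by (rule step2[OF lat]) (use wd[OF tr_permutes] in blast)
    then show ?thesis unfolding PI_def by (rule someI_ex)
  qed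
  have T1': "F (PI a b i) (tr a b k) = F i k" for a b i k
  proof -
    have "F (PI a b i) (tr a b k) *v w = F i k *v w" for w
    proof -
      have "mat_app F (ev k w \<circ> tr a b) (PI a b i) = mat_app F (ev k w) i" using PI[of a b] by blast
      then show ?thesis unfolding ev_tr mat_app_ev .
    qed
    then show ?thesis by (simp add: matrix_eq)
  qed
  have T1: "F (PI a b i) k = F i (tr a b k)" for a b i k
    using T1'[of a b i "tr a b k"] by simp
  have RI: "i = i'" if "\<And>k. F i k = F i' k" for i i'
  proof (rule ccontr)
    assume ne: "i \<noteq> i'"
    define x where "x = mat_app G (ev i w0)"
    have "mat_app F x i = mat_app F x i'" unfolding mat_app_def using that by simp
    then have "ev i w0 i = ev i w0 i'" unfolding x_def fsurj .
    then show False using ne w0 unfolding ev_def by auto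
  qed
  have T2: "F i a \<noteq> F i b \<longleftrightarrow> PI a b i \<noteq> i" if "a \<noteq> b" for a b i
  proof
    assume "F i a \<noteq> F i b"
    then show "PI a b i \<noteq> i" using T1[of a b i a] by auto
  next
    assume pi: "PI a b i \<noteq> i"
    show "F i a \<noteq> F i b"
    proof
      assume e: "F i a = F i b"
      have "F (PI a b i) k = F i k" for k
        unfolding T1 tr_def using e by auto
      then have "PI a b i = i" by (rule RI)
      then show False using pi by simp
    qed
  qed
  have T4: "\<exists>i. F i a \<noteq> F i b" if ab: "a \<noteq> b" for a b
  proof (rule ccontr)
    assume "\<not> ?thesis"
    then have "mat_app F (ev a w0) = mat_app F (ev b w0)" by (auto simp: mat_app_ev)
    then have "ev a w0 = ev b w0" by (rule finj)
    then have "ev a w0 a = ev b w0 a" by simp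
    then show False using ab w0 unfolding ev_def by auto
  qed
  have invol: "PI a b (PI a b i) = i" for a b i
    by (rule RI) (simp add: T1)
  have T3: "j = i \<or> j = PI a b i" if ab: "a \<noteq> b" and mi: "PI a b i \<noteq> i" and mj: "PI a b j \<noteq> j" for a b i j
  proof (rule ccontr)
    assume "\<not> ?thesis"
    then have ji: "j \<noteq> i" "j \<noteq> PI a b i" by auto
    let ?p = "PI a b"
    define c d where "c = i" and "d = ?p i"
    have dc: "d \<noteq> c" "?p c = d" "?p d = c" using mi invol unfolding c_def d_def by auto
    have pinj: "?p r = ?p s \<Longrightarrow> r = s" for r s by (metis invol)
    define y where "y r = (if r = c then w0 else if r = d then - w0 else 0)" for r
    define x where "x = mat_app G y"
    have Fx: "mat_app F x = y" unfolding x_def by (rule fsurj)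
    have yanti: "y r = - y (?p r)" for r
    proof -
      consider "r = c" | "r = d" | "r \<noteq> c" "r \<noteq> d" by blast
      then show ?thesis
      proof cases
        case 1 then show ?thesis using dc unfolding y_def by auto
      next
        case 2 then show ?thesis using dc unfolding y_def by auto
      next
        case 3
        then have "?p r \<noteq> c" "?p r \<noteq> d" using dc pinj by metis+
        then show ?thesis using 3 unfolding y_def by auto
      qed
    qed
    have hs: "mat_app F (x \<circ> tr a b) s = mat_app F (\<lambda>k. - x k) s" for s
    proof -
      have "mat_app F (x \<circ> tr a b) s = mat_app F (x \<circ> tr a b) (?p (?p s))" by (simp add: invol)
      also have "\<dots> = mat_app F x (?p s)" using PI[of a b] by blast
      also have "\<dots> = y (?p s)" using Fx by simp
      also have "\<dots> = - y s" using yanti[of s] by (simp add: invol)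
      also have "\<dots> = mat_app F (\<lambda>k. - x k) s" by (simp add: mat_app_neg Fx)
      finally show ?thesis .
    qed
    then have "mat_app F (x \<circ> tr a b) = mat_app F (\<lambda>k. - x k)" by (simp add: fun_eq_iff)
    then have "x \<circ> tr a b = (\<lambda>k. - x k)" by (rule finj)
    then have xt: "x (tr a b k) = - x k" for k by (metis comp_apply)
    have x0: "x k = 0" if "k \<noteq> a" "k \<noteq> b" for k
    proof -
      have "x k = - x k" using xt[of k] that by simp
      then have "2 *\<^sub>R x k = 0" by (metis add.right_inverse scaleR_2)
      then show ?thesis by simp
    qed
    have xb: "x b = - x a" using xt[of a] by simp
    have "y j = (\<Sum>k\<in>UNIV. F j k *v x k)" using Fx unfolding mat_app_def by metis
    also have "\<dots> = (\<Sum>k\<in>{a, b}. F j k *v x k)"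
      by (rule sum.mono_neutral_right) (auto simp: x0)
    also have "\<dots> = (F j a - F j b) *v x a"
      using ab xb by (simp add: mvneg matrix_vector_mult_diff_rdistrib)
    finally have yj: "y j = (F j a - F j b) *v x a" .
    have "y j = 0" unfolding y_def c_def d_def using ji by auto
    then have "F j a *v x a = F j b *v x a" using yj by (simp add: matrix_vector_mult_diff_rdistrib)
    moreover have "F j a \<noteq> F j b" using T2[OF ab] mj by auto
    ultimately have "x a = 0"
      using End_eq[OF S] FE unfolding is_End_pow_def by blast
    then have "x = (\<lambda>_. 0)"
    proof (intro ext)
      fix k assume xa: "x a = 0"
      show "x k = 0" using x0[of k] xb xa by (cases "k = a \<or> k = b") auto
    qed
    then have "y = (\<lambda>_. 0)" using Fx unfolding mat_app_def by auto
    then have "y c = 0" by simp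
    then show False using w0 unfolding y_def by simp
  qed
  obtain \<sigma> f g where sp: "\<sigma> permutes (UNIV :: 'n set)" and Ff: "\<And>i j. F i j = (if \<sigma> i = j then f else g)"
  proof -
    have "\<exists>\<sigma> f g. \<sigma> permutes (UNIV :: 'n set) \<and> (\<forall>i j. F i j = (if \<sigma> i = j then f else g))"
    proof (rule comb[of F PI])
      show "F (PI a b i) k = F i (tr a b k)" for a b i k by (rule T1)
      show "F i a \<noteq> F i b \<longleftrightarrow> PI a b i \<noteq> i" if "a \<noteq> b" for a b i using T2 that by blast
      show "j = i \<or> j = PI a b i" if "a \<noteq> b" "PI a b i \<noteq> i" "PI a b j \<noteq> j" for a b i j
        using T3 that by blast
      show "\<exists>i. F i a \<noteq> F i b" if "a \<noteq> b" for a b using T4 that by blast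
      show "CARD('n) \<ge> 2" by (rule card)
    qed
    then show ?thesis using that by blast
  qed
  obtain i0 :: 'n where True by simp
  obtain j0 :: 'n where j0: "j0 \<noteq> \<sigma> i0"
  proof -
    have "\<not> UNIV \<subseteq> {\<sigma> i0}"
    proof
      assume "UNIV \<subseteq> {\<sigma> i0}"
      then have "CARD('n) \<le> card {\<sigma> i0}" using card_mono[of "{\<sigma> i0}" UNIV] by simp
      then show False using card by simp
    qed
    then show ?thesis using that by auto
  qed
  have fE: "f \<in> End_AV L" using FE Ff[of i0 "\<sigma> i0"] unfolding is_End_pow_def by metis
  have gE: "g \<in> End_AV L" using FE Ff[of i0 j0] j0 unfolding is_End_pow_def by metis
  have "F = mat_comp (perm_mat \<sigma>) (fg_mat f g)"
  proof (intro ext)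
    fix i j
    have "mat_comp (perm_mat \<sigma>) (fg_mat f g) i j = (\<Sum>k\<in>UNIV. if \<sigma> i = k then (if k = j then f else g) else 0)"
      unfolding mat_comp_def perm_mat_def fg_mat_def by (rule sum.cong) auto
    also have "\<dots> = F i j" using Ff by simp
    finally show "F i j = mat_comp (perm_mat \<sigma>) (fg_mat f g) i j" by simp
  qed
  then show ?thesis using sp fE gE by blast
qed

theorem theorem1p4:
  fixes L :: "(complex^'g::finite) set"
    and F :: "'n::finite \<Rightarrow> 'n \<Rightarrow> complex^'g^'g"
  assumes "simple_av L"
    and "CARD('n) \<ge> 2"
    and "is_Aut_pow L F"
  shows "symmetric_condition L F \<longleftrightarrow>
    (\<exists>\<sigma> f g. \<sigma> permutes (UNIV :: 'n set) \<and> f \<in> End_AV L \<and> g \<in> End_AV L \<and>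
       F = mat_comp (perm_mat \<sigma>) (fg_mat f g))"
proof
  assume "symmetric_condition L F"
  then show "\<exists>\<sigma> f g. \<sigma> permutes (UNIV :: 'n set) \<and> f \<in> End_AV L \<and> g \<in> End_AV L \<and>
       F = mat_comp (perm_mat \<sigma>) (fg_mat f g)"
    by (rule forward[OF assms(1,2,3)])
next
  assume "\<exists>\<sigma> f g. \<sigma> permutes (UNIV :: 'n set) \<and> f \<in> End_AV L \<and> g \<in> End_AV L \<and>
       F = mat_comp (perm_mat \<sigma>) (fg_mat f g)"
  moreover have "is_lattice L" using assms(1) unfolding simple_av_def is_abelian_variety_def by auto
  ultimately show "symmetric_condition L F" using backward[OF _ assms(3)] by blast
qed

end
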